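(* Let $a$ and $i$ be positive integers. Then $$\binom{3a+i}{a+i}-\binom{3a+2i}{a}=\sum_{k\geq1}\left\{\frac{i+3k}{i+k}\binom{i+k}{2k}-\binom{i}{k}\right\}\binom{3a+i}{a-k}.$$
   Context: Here $\binom{n}{m}$ denotes the ordinary binomial coefficient, with $\binom{n}{m}=0$ when $m<0$ or $m>n$ (so the sum is finite). *)

theory Defs
  imports Complex_Main
begin

end

theory Submission
  imports Defs
begin

lemma H1: "real (Suc j) * real (n choose Suc j) = (real n - real j) * real (n choose j)"
proof (cases "j \<le> n")
  case True
  have "Suc j * (n choose Suc j) = (n - j) * (n choose j)"
    using binomial_absorption[of j n] binomial_absorb_comp[of n j] by simp
  then have "real (Suc j * (n choose Suc j)) = real ((n - j) * (n choose j))" by simp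
  then show ?thesis using True by (simp only: of_nat_mult of_nat_diff)
next
  case False
  then show ?thesis by (simp add: binomial_eq_0)
qed

lemma H2: "real (Suc j) * real (Suc n choose Suc j) = real (Suc n) * real (n choose j)"
  by (metis Suc_times_binomial of_nat_mult)

lemma alg:
  fixes A I K Y Z Z1 U1 U2 U3 U4 :: real
  assumes K: "K \<ge> 1" and AK: "A \<ge> K" and I: "I \<ge> 0"
    and h1: "(2*K-1)*U1 = (I-K+1)*Y" and h2: "(2*K-1)*U2 = (I+K)*Y"
    and h3: "(2*K)*U3 = (I-K+1)*U2" and h4: "(2*K)*U4 = (I+K+1)*U2"
    and h5: "(A-K)*Z = (2*A+I+K+1)*Z1"
  shows "(A+I+1)*(U4+U2)*(Z+Z1) - (3*A+I+1)*(U3+U1)*Z = (3*A+I+1)*(Y*Z - U3*Z1)"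
proof -
  have d1: "2*K-1 \<noteq> 0" "2*K \<noteq> 0" "2*A+I+K+1 \<noteq> 0" using K AK I by auto
  have e1: "U1 = (I-K+1)*Y/(2*K-1)" using h1 d1 by (simp add: field_simps)
  have e2: "U2 = (I+K)*Y/(2*K-1)" using h2 d1 by (simp add: field_simps)
  have e3: "U3 = (I-K+1)*U2/(2*K)" using h3 d1 by (simp add: field_simps)
  have e4: "U4 = (I+K+1)*U2/(2*K)" using h4 d1 by (simp add: field_simps)
  have e5: "Z1 = (A-K)*Z/(2*A+I+K+1)" using h5 d1 by (simp add: field_simps)
  show ?thesis unfolding e1 e3 e4 e5 unfolding e2 using d1
    apply (simp add: divide_simps)
    apply (simp add: algebra_simps)
    done
qed


definition cc :: "nat \<Rightarrow> nat \<Rightarrow> real" where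
  "cc i k = (if k = 0 then 1 else real ((i+k) choose (2*k)) + real ((i+k-1) choose (2*k-1)))"

definition DD :: "nat \<Rightarrow> nat \<Rightarrow> nat \<Rightarrow> real" where
  "DD a i k = (if k = 0 \<or> a < k then 0
     else real ((i+k-1) choose (2*k-2)) * real ((3*a+i) choose (a-k)))"

lemma step0:
  assumes "1 \<le> a"
  shows "real (a+i+1) * cc (Suc i) 0 * real (Suc (3*a+i) choose a)
     - real (3*a+i+1) * cc i 0 * real ((3*a+i) choose a)
     = real (3*a+i+1) * (DD a i 0 - DD a i (Suc 0))"
proof -
  obtain a' where a: "a = Suc a'" using assms by (cases a) auto
  define Z where "Z = real ((3*a+i) choose a)"
  define Z1 where "Z1 = real ((3*a+i) choose a')"
  have p0: "Suc (3*a+i) choose a = ((3*a+i) choose a') + ((3*a+i) choose a)"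
    unfolding a by (rule binomial_Suc_Suc)
  have p: "real (Suc (3*a+i) choose a) = Z + Z1" unfolding Z_def Z1_def p0 by simp
  have h: "real a * Z = real (2*a+i+1) * Z1"
    using H1[of a' "3*a+i"] unfolding Z_def Z1_def a by simp
  have d: "DD a i (Suc 0) = Z1" unfolding DD_def Z1_def a by simp
  have az: "real a \<noteq> 0" using assms by simp
  have e: "Z = real (2*a+i+1) * Z1 / real a" using h az by (simp add: field_simps)
  show ?thesis unfolding p d Z_def[symmetric] unfolding e using az
    by (simp add: cc_def DD_def field_simps)
qed


lemma stepk:
  assumes "Suc k' \<le> a"
  shows "real (a+i+1) * cc (Suc i) (Suc k') * real (Suc (3*a+i) choose (a - Suc k'))
     - real (3*a+i+1) * cc i (Suc k') * real ((3*a+i) choose (a - Suc k'))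
     = real (3*a+i+1) * (DD a i (Suc k') - DD a i (Suc (Suc k')))"
proof -
  define N where "N = 3*a+i"
  define Y where "Y = real ((i+k') choose (2*k'))"
  define U1 where "U1 = real ((i+k') choose Suc (2*k'))"
  define U2 where "U2 = real (Suc (i+k') choose Suc (2*k'))"
  define U3 where "U3 = real (Suc (i+k') choose Suc (Suc (2*k')))"
  define U4 where "U4 = real (Suc (Suc (i+k')) choose Suc (Suc (2*k')))"
  define Z where "Z = real (N choose (a - Suc k'))"
  define Z1 where "Z1 = (if Suc k' = a then 0 else real (N choose (a - Suc (Suc k'))))"
  have h1: "(2*real (Suc k')-1)*U1 = (real i - real (Suc k')+1)*Y"
    using H1[of "2*k'" "i+k'"] unfolding U1_def Y_def by simp
  have h2: "(2*real (Suc k')-1)*U2 = (real i + real (Suc k'))*Y"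
    using H2[of "2*k'" "i+k'"] unfolding U2_def Y_def by simp
  have h3: "(2*real (Suc k'))*U3 = (real i - real (Suc k')+1)*U2"
    using H1[of "Suc (2*k')" "Suc (i+k')"] unfolding U3_def U2_def by simp
  have h4: "(2*real (Suc k'))*U4 = (real i + real (Suc k')+1)*U2"
    using H2[of "Suc (2*k')" "Suc (i+k')"] unfolding U4_def U2_def by simp
  have h5: "(real a - real (Suc k'))*Z = (2*real a + real i + real (Suc k') + 1)*Z1"
  proof (cases "Suc k' = a")
    case True
    then show ?thesis unfolding Z1_def by simp
  next
    case False
    then obtain m' where m: "a - Suc k' = Suc m'" using assms
      by (metis Suc_diff_Suc diff_Suc_Suc le_neq_implies_less)
    have mm: "a - Suc (Suc k') = m'" using m by simp
    have "real (Suc m') * real (N choose Suc m') = (real N - real m') * real (N choose m')"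
      by (rule H1)
    moreover have "real (Suc m') = real a - real (Suc k')" using m assms by simp
    moreover have "real N - real m' = 2*real a + real i + real (Suc k') + 1"
      using m assms unfolding N_def by simp
    ultimately have "(real a - real (Suc k')) * real (N choose Suc m')
       = (2*real a + real i + real (Suc k') + 1) * real (N choose m')" by metis
    then show ?thesis unfolding Z_def Z1_def m mm using False by simp
  qed
  have p: "real (Suc N choose (a - Suc k')) = Z + Z1"
  proof (cases "Suc k' = a")
    case True
    then show ?thesis unfolding Z_def Z1_def by simp
  next
    case False
    then obtain m' where m: "a - Suc k' = Suc m'" using assms
      by (metis Suc_diff_Suc diff_Suc_Suc le_neq_implies_less)
    have mm: "a - Suc (Suc k') = m'" using m by simp
    show ?thesis unfolding Z_def Z1_def m mm using False by simp
  qed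
  have c1: "cc (Suc i) (Suc k') = U4 + U2" unfolding cc_def U4_def U2_def
    by (simp add: algebra_simps)
  have c0: "cc i (Suc k') = U3 + U1" unfolding cc_def U3_def U1_def
    by (simp add: algebra_simps)
  have d0: "DD a i (Suc k') = Y * Z" unfolding DD_def Y_def Z_def N_def using assms
    by (simp add: algebra_simps)
  have d1: "DD a i (Suc (Suc k')) = U3 * Z1" unfolding DD_def U3_def Z1_def N_def using assms
    by (auto simp add: algebra_simps)
  have "(real a+real i+1)*(U4+U2)*(Z+Z1) - (3*real a+real i+1)*(U3+U1)*Z
        = (3*real a+real i+1)*(Y*Z - U3*Z1)"
    by (rule alg[OF _ _ _ h1 h2 h3 h4 h5]) (use assms in auto)
  then show ?thesis unfolding c1 c0 d0 d1 N_def[symmetric] Z_def[symmetric] p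
    by (simp add: N_def algebra_simps)
qed


lemma Srec:
  assumes "1 \<le> a"
  shows "real (a+i+1) * (\<Sum>k=0..a. cc (Suc i) k * real (Suc (3*a+i) choose (a-k)))
       = real (3*a+i+1) * (\<Sum>k=0..a. cc i k * real ((3*a+i) choose (a-k)))"
proof -
  have t: "real (a+i+1) * (cc (Suc i) k * real (Suc (3*a+i) choose (a-k)))
       - real (3*a+i+1) * (cc i k * real ((3*a+i) choose (a-k)))
       = - (real (3*a+i+1) * (DD a i (Suc k) - DD a i k))" if "k \<in> {0..a}" for k
  proof (cases k)
    case 0
    then show ?thesis using step0[OF assms, of i] by (simp add: algebra_simps)
  next
    case (Suc k')
    then show ?thesis using stepk[of k' a i] that by (simp add: algebra_simps)
  qed
  have "real (a+i+1) * (\<Sum>k=0..a. cc (Suc i) k * real (Suc (3*a+i) choose (a-k)))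
       - real (3*a+i+1) * (\<Sum>k=0..a. cc i k * real ((3*a+i) choose (a-k)))
       = (\<Sum>k=0..a. - (real (3*a+i+1) * (DD a i (Suc k) - DD a i k)))"
    unfolding sum_distrib_left sum_subtractf[symmetric] by (rule sum.cong[OF refl t])
  also have "\<dots> = - (real (3*a+i+1) * (\<Sum>k=0..a. (DD a i (Suc k) - DD a i k)))"
    by (simp add: sum_distrib_left sum_negf)
  also have "\<dots> = 0" by (subst sum_Suc_diff) (auto simp: DD_def)
  finally show ?thesis by simp
qed

lemma S_closed:
  assumes "1 \<le> a"
  shows "(\<Sum>k=0..a. cc i k * real ((3*a+i) choose (a-k))) = real ((3*a+i) choose (2*a))"
proof (induction i)
  case 0
  have z: "cc 0 k = 0" if "k \<in> {Suc 0..a}" for k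
    using that by (auto simp: cc_def binomial_eq_0)
  have "(\<Sum>k=0..a. cc 0 k * real ((3*a+0) choose (a-k)))
      = cc 0 0 * real ((3*a) choose a) + (\<Sum>k=Suc 0..a. cc 0 k * real ((3*a+0) choose (a-k)))"
    by (subst sum.atLeast_Suc_atMost) auto
  also have "\<dots> = real ((3*a) choose a)" using z by (simp add: cc_def)
  also have "\<dots> = real ((3*a) choose (2*a))"
    using binomial_symmetric[of a "3*a"] by simp
  finally show ?case by simp
next
  case (Suc i)
  have b: "(Suc (3*a+i) - 2*a) * (Suc (3*a+i) choose (2*a)) = Suc (3*a+i) * ((3*a+i) choose (2*a))"
    using binomial_absorb_comp[of "Suc (3*a+i)" "2*a"] by simp
  have b': "real (a+i+1) * real (Suc (3*a+i) choose (2*a)) = real (3*a+i+1) * real ((3*a+i) choose (2*a))"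
  proof -
    have "Suc (3*a+i) - 2*a = a+i+1" by simp
    with b have "(a+i+1) * (Suc (3*a+i) choose (2*a)) = (3*a+i+1) * ((3*a+i) choose (2*a))" by simp
    then show ?thesis by (metis of_nat_mult)
  qed
  have "real (a+i+1) * (\<Sum>k=0..a. cc (Suc i) k * real (Suc (3*a+i) choose (a-k)))
      = real (a+i+1) * real (Suc (3*a+i) choose (2*a))"
    using Srec[OF assms, of i] Suc.IH b' by simp
  then have "(\<Sum>k=0..a. cc (Suc i) k * real (Suc (3*a+i) choose (a-k)))
      = real (Suc (3*a+i) choose (2*a))" by simp
  then show ?case by simp
qed

theorem theorem2:
  fixes a i :: nat
  assumes "a \<ge> 1" and "i \<ge> 1"
  shows "real ((3*a+i) choose (a+i)) - real ((3*a+2*i) choose a) =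
    (\<Sum>k=1..a. ((real (i+3*k) / real (i+k)) * real ((i+k) choose (2*k))
                   - real (i choose k)) * real ((3*a+i) choose (a-k)))"
proof -
  have trm: "((real (i+3*k) / real (i+k)) * real ((i+k) choose (2*k)) - real (i choose k))
      * real ((3*a+i) choose (a-k))
      = cc i k * real ((3*a+i) choose (a-k)) - real (i choose k) * real ((3*a+i) choose (a-k))"
    if kin: "k \<in> {1..a}" for k
  proof -
    obtain k' where k: "k = Suc k'" using kin by (cases k) auto
    have "real (Suc (Suc (2*k'))) * real (Suc (i+k') choose Suc (Suc (2*k')))
        = real (Suc (i+k')) * real ((i+k') choose Suc (2*k'))"
      by (rule H2)
    then have e: "real (2*k) * real ((i+k) choose (2*k)) = real (i+k) * real ((i+k-1) choose (2*k-1))"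
      unfolding k by simp
    have pos: "real (i+k) \<noteq> 0" using kin by simp
    have "(real (i+3*k) / real (i+k)) * real ((i+k) choose (2*k))
        = real ((i+k) choose (2*k)) + real (2*k) * real ((i+k) choose (2*k)) / real (i+k)"
      using pos by (simp add: field_simps)
    also have "\<dots> = cc i k" unfolding e using pos k by (simp add: cc_def)
    finally show ?thesis by (simp add: algebra_simps)
  qed
  have S: "(\<Sum>k=0..a. cc i k * real ((3*a+i) choose (a-k))) = real ((3*a+i) choose (2*a))"
    using S_closed[OF assms(1)] .
  have V: "(\<Sum>k=0..a. real (i choose k) * real ((3*a+i) choose (a-k))) = real ((3*a+2*i) choose a)"
  proof -
    have "(\<Sum>k\<le>a. (i choose k) * ((3*a+i) choose (a-k))) = (i + (3*a+i)) choose a"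
      by (rule vandermonde)
    then have "(\<Sum>k=0..a. (i choose k) * ((3*a+i) choose (a-k))) = (3*a+2*i) choose a"
      by (simp add: atLeast0AtMost algebra_simps)
    then show ?thesis by (metis (no_types, lifting) of_nat_mult of_nat_sum sum.cong)
  qed
  have split1: "(\<Sum>k=0..a. cc i k * real ((3*a+i) choose (a-k)))
      = cc i 0 * real ((3*a+i) choose a) + (\<Sum>k=1..a. cc i k * real ((3*a+i) choose (a-k)))"
    by (subst sum.atLeast_Suc_atMost) (auto simp: assms)
  have split2: "(\<Sum>k=0..a. real (i choose k) * real ((3*a+i) choose (a-k)))
      = real (i choose 0) * real ((3*a+i) choose a) + (\<Sum>k=1..a. real (i choose k) * real ((3*a+i) choose (a-k)))"
    by (subst sum.atLeast_Suc_atMost) (auto simp: assms)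
  have sym: "(3*a+i) choose (a+i) = (3*a+i) choose (2*a)"
    using binomial_symmetric[of "a+i" "3*a+i"] by simp
  have "(\<Sum>k=1..a. ((real (i+3*k) / real (i+k)) * real ((i+k) choose (2*k))
                   - real (i choose k)) * real ((3*a+i) choose (a-k)))
      = (\<Sum>k=1..a. cc i k * real ((3*a+i) choose (a-k)))
        - (\<Sum>k=1..a. real (i choose k) * real ((3*a+i) choose (a-k)))"
    unfolding sum_subtractf[symmetric] by (rule sum.cong[OF refl trm])
  also have "\<dots> = real ((3*a+i) choose (2*a)) - real ((3*a+2*i) choose a)"
    using S V split1 split2 by (simp add: cc_def)
  finally show ?thesis using sym by simp
qed

end
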